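(* Let $M\in\bar{\mathcal{O}}$ be indecomposable. Then every $\varphi\in\operatorname{End}_{\bar{\mathcal{O}}}(M)$ is either an automorphism or locally nilpotent (i.e. for every $v\in M$ there is $k\ge0$ with $\varphi^k(v)=0$).
   Context: $\mathbb{K}$ is an algebraically closed field of characteristic $0$. $\mathfrak{g}=\bigcup_{n\ge1}\mathfrak{g}_n$ is a root-reductive Lie algebra (nested finite-dimensional reductive Lie algebras with nested Cartan subalgebras, each inclusion $\mathfrak{g}_n\hookrightarrow\mathfrak{g}_{n+1}$ a root inclusion). $\mathfrak{h}$ is a splitting maximal toral subalgebra ($\mathfrak{h}\cap\mathfrak{g}_n$ maximal toral in $\mathfrak{g}_n$, $\mathfrak{g}=\mathfrak{h}\oplus\bigoplus_{\alpha\in\Delta}\mathfrak{g}^\alpha$). $\mathfrak{b}=\mathfrak{h}\oplus\mathfrak{n}$, $\mathfrak{n}=\bigoplus_{\alpha\in\Delta^+}\mathfrak{g}^\alpha$, is a splitting Borel subalgebra given by positive roots $\Delta^+$, assumed Dynkin (generated by $\mathfrak{h}$ and the simple root spaces). $\bar{\mathcal{O}}$ is the full subcategory of $\mathfrak{g}$-modules that are $\mathfrak{h}$-weight modules with finite-dimensional weight spaces and are locally $\mathfrak{n}$-finite. *)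

theory Defs
  imports Main "HOL-Computational_Algebra.Polynomial" "HOL-Library.Function_Algebras"
begin

(* Ambient conventions:
   - 'k is the ground field (class field_char_0, plus algebraic closedness as an explicit hypothesis);
   - the Lie algebra g is the whole type 'g, a 'k-vector space via sg, with bracket br;
   - a g-module M is the whole type 'm, a 'k-vector space via sm, with action act;
   - weights / roots (elements of h^* ) are represented by functions 'g => 'k that vanish outside h,
     so that two weights are equal iff they agree on h. *)

definition alg_closed_field :: "'k::field itself \<Rightarrow> bool" where
  "alg_closed_field _ \<longleftrightarrow> (\<forall>p :: 'k poly. degree p > 0 \<longrightarrow> (\<exists>x. poly p x = 0))"

definition lie_algebra :: "('k::field \<Rightarrow> 'g::ab_group_add \<Rightarrow> 'g) \<Rightarrow> ('g \<Rightarrow> 'g \<Rightarrow> 'g) \<Rightarrow> bool" where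
  "lie_algebra sg br \<longleftrightarrow> vector_space sg
     \<and> (\<forall>x y z. br (x + y) z = br x z + br y z)
     \<and> (\<forall>a x y. br (sg a x) y = sg a (br x y))
     \<and> (\<forall>x. br x x = 0)
     \<and> (\<forall>x y z. br x (br y z) + br y (br z x) + br z (br x y) = 0)"

definition fin_dim :: "('k::field \<Rightarrow> 'v::ab_group_add \<Rightarrow> 'v) \<Rightarrow> 'v set \<Rightarrow> bool" where
  "fin_dim s S \<longleftrightarrow> module.subspace s S \<and> (\<exists>F. finite F \<and> F \<subseteq> S \<and> module.span s F = S)"

definition subalg :: "('k::field \<Rightarrow> 'g::ab_group_add \<Rightarrow> 'g) \<Rightarrow> ('g \<Rightarrow> 'g \<Rightarrow> 'g) \<Rightarrow> 'g set \<Rightarrow> bool" where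
  "subalg sg br S \<longleftrightarrow> module.subspace sg S \<and> (\<forall>x\<in>S. \<forall>y\<in>S. br x y \<in> S)"

definition lie_ideal :: "('k::field \<Rightarrow> 'g::ab_group_add \<Rightarrow> 'g) \<Rightarrow> ('g \<Rightarrow> 'g \<Rightarrow> 'g) \<Rightarrow> 'g set \<Rightarrow> 'g set \<Rightarrow> bool" where
  "lie_ideal sg br S I \<longleftrightarrow> module.subspace sg I \<and> I \<subseteq> S \<and> (\<forall>x\<in>S. \<forall>y\<in>I. br x y \<in> I)"

text \<open>Finite-dimensional reductive Lie algebra: the adjoint representation is semisimple,
  i.e. every ideal (= ad-invariant subspace) has a complementary ideal.\<close>
definition reductive :: "('k::field \<Rightarrow> 'g::ab_group_add \<Rightarrow> 'g) \<Rightarrow> ('g \<Rightarrow> 'g \<Rightarrow> 'g) \<Rightarrow> 'g set \<Rightarrow> bool" where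
  "reductive sg br S \<longleftrightarrow> subalg sg br S \<and> fin_dim sg S
     \<and> (\<forall>I. lie_ideal sg br S I \<longrightarrow>
           (\<exists>J. lie_ideal sg br S J \<and> I \<inter> J = {0} \<and> {a + b | a b. a \<in> I \<and> b \<in> J} = S))"

definition ad_semisimple :: "('k::field \<Rightarrow> 'g::ab_group_add \<Rightarrow> 'g) \<Rightarrow> ('g \<Rightarrow> 'g \<Rightarrow> 'g) \<Rightarrow> 'g set \<Rightarrow> 'g \<Rightarrow> bool" where
  "ad_semisimple sg br S x \<longleftrightarrow> module.span sg {y \<in> S. \<exists>c. br x y = sg c y} = S"

definition toral :: "('k::field \<Rightarrow> 'g::ab_group_add \<Rightarrow> 'g) \<Rightarrow> ('g \<Rightarrow> 'g \<Rightarrow> 'g) \<Rightarrow> 'g set \<Rightarrow> 'g set \<Rightarrow> bool" where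
  "toral sg br S T \<longleftrightarrow> subalg sg br T \<and> T \<subseteq> S \<and> (\<forall>x\<in>T. ad_semisimple sg br S x)"

definition max_toral :: "('k::field \<Rightarrow> 'g::ab_group_add \<Rightarrow> 'g) \<Rightarrow> ('g \<Rightarrow> 'g \<Rightarrow> 'g) \<Rightarrow> 'g set \<Rightarrow> 'g set \<Rightarrow> bool" where
  "max_toral sg br S T \<longleftrightarrow> toral sg br S T \<and> (\<forall>T'. toral sg br S T' \<and> T \<subseteq> T' \<longrightarrow> T' = T)"

definition root_space :: "('k::field \<Rightarrow> 'g::ab_group_add \<Rightarrow> 'g) \<Rightarrow> ('g \<Rightarrow> 'g \<Rightarrow> 'g) \<Rightarrow> 'g set \<Rightarrow> 'g set \<Rightarrow> ('g \<Rightarrow> 'k) \<Rightarrow> 'g set" where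
  "root_space sg br S T \<alpha> = {x \<in> S. \<forall>t\<in>T. br t x = sg (\<alpha> t) x}"

definition roots :: "('k::field \<Rightarrow> 'g::ab_group_add \<Rightarrow> 'g) \<Rightarrow> ('g \<Rightarrow> 'g \<Rightarrow> 'g) \<Rightarrow> 'g set \<Rightarrow> 'g set \<Rightarrow> ('g \<Rightarrow> 'k) set" where
  "roots sg br S T = {\<alpha>. (\<forall>x. x \<notin> T \<longrightarrow> \<alpha> x = 0) \<and> (\<exists>t\<in>T. \<alpha> t \<noteq> 0) \<and> root_space sg br S T \<alpha> \<noteq> {0}}"

definition root_inclusion :: "('k::field \<Rightarrow> 'g::ab_group_add \<Rightarrow> 'g) \<Rightarrow> ('g \<Rightarrow> 'g \<Rightarrow> 'g) \<Rightarrow> 'g set \<Rightarrow> 'g set \<Rightarrow> 'g set \<Rightarrow> 'g set \<Rightarrow> bool" where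
  "root_inclusion sg br S1 T1 S2 T2 \<longleftrightarrow> S1 \<subseteq> S2 \<and> T1 \<subseteq> T2 \<and>
     (\<forall>\<alpha>\<in>roots sg br S1 T1. \<exists>\<beta>\<in>roots sg br S2 T2. root_space sg br S1 T1 \<alpha> \<subseteq> root_space sg br S2 T2 \<beta>)"

definition root_reductive :: "('k::field \<Rightarrow> 'g::ab_group_add \<Rightarrow> 'g) \<Rightarrow> ('g \<Rightarrow> 'g \<Rightarrow> 'g) \<Rightarrow> (nat \<Rightarrow> 'g set) \<Rightarrow> 'g set \<Rightarrow> bool" where
  "root_reductive sg br gs h \<longleftrightarrow>
     (\<forall>n. reductive sg br (gs n)) \<and> (\<forall>n. gs n \<subseteq> gs (Suc n)) \<and> (\<Union>n. gs n) = UNIV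
     \<and> (\<forall>n. max_toral sg br (gs n) (h \<inter> gs n))
     \<and> (\<forall>n. root_inclusion sg br (gs n) (h \<inter> gs n) (gs (Suc n)) (h \<inter> gs (Suc n)))"

definition splitting_max_toral :: "('k::field \<Rightarrow> 'g::ab_group_add \<Rightarrow> 'g) \<Rightarrow> ('g \<Rightarrow> 'g \<Rightarrow> 'g) \<Rightarrow> 'g set \<Rightarrow> bool" where
  "splitting_max_toral sg br h \<longleftrightarrow> max_toral sg br UNIV h
     \<and> module.span sg (h \<union> (\<Union>\<alpha>\<in>roots sg br UNIV h. root_space sg br UNIV h \<alpha>)) = UNIV"

definition pos_system :: "('k::field \<Rightarrow> 'g::ab_group_add \<Rightarrow> 'g) \<Rightarrow> ('g \<Rightarrow> 'g \<Rightarrow> 'g) \<Rightarrow> 'g set \<Rightarrow> ('g \<Rightarrow> 'k) set \<Rightarrow> bool" where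
  "pos_system sg br h P \<longleftrightarrow> P \<subseteq> roots sg br UNIV h
     \<and> (\<forall>\<alpha>\<in>roots sg br UNIV h. \<alpha> \<in> P \<or> - \<alpha> \<in> P)
     \<and> (\<forall>\<alpha>\<in>P. - \<alpha> \<notin> P)
     \<and> (\<forall>\<alpha>\<in>P. \<forall>\<beta>\<in>P. \<alpha> + \<beta> \<in> roots sg br UNIV h \<longrightarrow> \<alpha> + \<beta> \<in> P)"

definition nilrad :: "('k::field \<Rightarrow> 'g::ab_group_add \<Rightarrow> 'g) \<Rightarrow> ('g \<Rightarrow> 'g \<Rightarrow> 'g) \<Rightarrow> 'g set \<Rightarrow> ('g \<Rightarrow> 'k) set \<Rightarrow> 'g set" where
  "nilrad sg br h P = module.span sg (\<Union>\<alpha>\<in>P. root_space sg br UNIV h \<alpha>)"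

definition borel :: "('k::field \<Rightarrow> 'g::ab_group_add \<Rightarrow> 'g) \<Rightarrow> ('g \<Rightarrow> 'g \<Rightarrow> 'g) \<Rightarrow> 'g set \<Rightarrow> ('g \<Rightarrow> 'k) set \<Rightarrow> 'g set" where
  "borel sg br h P = module.span sg (h \<union> nilrad sg br h P)"

definition simple_root :: "('g \<Rightarrow> 'k::field) set \<Rightarrow> ('g \<Rightarrow> 'k) \<Rightarrow> bool" where
  "simple_root P \<alpha> \<longleftrightarrow> \<alpha> \<in> P \<and> \<not> (\<exists>\<beta>\<in>P. \<exists>\<gamma>\<in>P. \<alpha> = \<beta> + \<gamma>)"

definition lie_gen :: "('k::field \<Rightarrow> 'g::ab_group_add \<Rightarrow> 'g) \<Rightarrow> ('g \<Rightarrow> 'g \<Rightarrow> 'g) \<Rightarrow> 'g set \<Rightarrow> 'g set" where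
  "lie_gen sg br A = \<Inter>{B. subalg sg br B \<and> A \<subseteq> B}"

definition dynkin :: "('k::field \<Rightarrow> 'g::ab_group_add \<Rightarrow> 'g) \<Rightarrow> ('g \<Rightarrow> 'g \<Rightarrow> 'g) \<Rightarrow> 'g set \<Rightarrow> ('g \<Rightarrow> 'k) set \<Rightarrow> bool" where
  "dynkin sg br h P \<longleftrightarrow>
     borel sg br h P = lie_gen sg br (h \<union> (\<Union>\<alpha>\<in>{\<alpha>. simple_root P \<alpha>}. root_space sg br UNIV h \<alpha>))"

definition g_module :: "('k::field \<Rightarrow> 'g::ab_group_add \<Rightarrow> 'g) \<Rightarrow> ('g \<Rightarrow> 'g \<Rightarrow> 'g)
    \<Rightarrow> ('k \<Rightarrow> 'm::ab_group_add \<Rightarrow> 'm) \<Rightarrow> ('g \<Rightarrow> 'm \<Rightarrow> 'm) \<Rightarrow> bool" where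
  "g_module sg br sm act \<longleftrightarrow> vector_space sm
     \<and> (\<forall>x u v. act x (u + v) = act x u + act x v)
     \<and> (\<forall>x a v. act x (sm a v) = sm a (act x v))
     \<and> (\<forall>x y v. act (x + y) v = act x v + act y v)
     \<and> (\<forall>a x v. act (sg a x) v = sm a (act x v))
     \<and> (\<forall>x y v. act (br x y) v = act x (act y v) - act y (act x v))"

definition weight_space :: "('k::field \<Rightarrow> 'm::ab_group_add \<Rightarrow> 'm) \<Rightarrow> ('g \<Rightarrow> 'm \<Rightarrow> 'm) \<Rightarrow> 'g set \<Rightarrow> ('g \<Rightarrow> 'k) \<Rightarrow> 'm set" where
  "weight_space sm act h lam = {v. \<forall>t\<in>h. act t v = sm (lam t) v}"

definition n_span :: "('k::field \<Rightarrow> 'm::ab_group_add \<Rightarrow> 'm) \<Rightarrow> ('g \<Rightarrow> 'm \<Rightarrow> 'm) \<Rightarrow> 'g set \<Rightarrow> 'm \<Rightarrow> 'm set" where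
  "n_span sm act N v = \<Inter>{U. module.subspace sm U \<and> v \<in> U \<and> (\<forall>x\<in>N. \<forall>u\<in>U. act x u \<in> U)}"

definition in_O_bar :: "('k::field \<Rightarrow> 'g::ab_group_add \<Rightarrow> 'g) \<Rightarrow> ('g \<Rightarrow> 'g \<Rightarrow> 'g) \<Rightarrow> 'g set \<Rightarrow> ('g \<Rightarrow> 'k) set
    \<Rightarrow> ('k \<Rightarrow> 'm::ab_group_add \<Rightarrow> 'm) \<Rightarrow> ('g \<Rightarrow> 'm \<Rightarrow> 'm) \<Rightarrow> bool" where
  "in_O_bar sg br h P sm act \<longleftrightarrow> g_module sg br sm act
     \<and> module.span sm (\<Union>lam. weight_space sm act h lam) = UNIV
     \<and> (\<forall>lam. fin_dim sm (weight_space sm act h lam))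
     \<and> (\<forall>v. fin_dim sm (n_span sm act (nilrad sg br h P) v))"

definition submodule :: "('k::field \<Rightarrow> 'm::ab_group_add \<Rightarrow> 'm) \<Rightarrow> ('g \<Rightarrow> 'm \<Rightarrow> 'm) \<Rightarrow> 'm set \<Rightarrow> bool" where
  "submodule sm act U \<longleftrightarrow> module.subspace sm U \<and> (\<forall>x u. u \<in> U \<longrightarrow> act x u \<in> U)"

definition indecomposable :: "('k::field \<Rightarrow> 'm::ab_group_add \<Rightarrow> 'm) \<Rightarrow> ('g \<Rightarrow> 'm \<Rightarrow> 'm) \<Rightarrow> bool" where
  "indecomposable sm act \<longleftrightarrow> (UNIV :: 'm set) \<noteq> {0}
     \<and> (\<forall>U V. submodule sm act U \<and> submodule sm act V \<and> U \<inter> V = {0}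
              \<and> {u + v | u v. u \<in> U \<and> v \<in> V} = UNIV \<longrightarrow> U = {0} \<or> V = {0})"

definition module_endo :: "('k::field \<Rightarrow> 'm::ab_group_add \<Rightarrow> 'm) \<Rightarrow> ('g \<Rightarrow> 'm \<Rightarrow> 'm) \<Rightarrow> ('m \<Rightarrow> 'm) \<Rightarrow> bool" where
  "module_endo sm act \<phi> \<longleftrightarrow> (\<forall>u v. \<phi> (u + v) = \<phi> u + \<phi> v)
     \<and> (\<forall>a v. \<phi> (sm a v) = sm a (\<phi> v)) \<and> (\<forall>x v. \<phi> (act x v) = act x (\<phi> v))"

end

theory Submission
  imports Defs
begin

locale fitctx = vector_space s for s :: "'k::field \<Rightarrow> 'm::ab_group_add \<Rightarrow> 'm" +
  fixes \<phi> :: "'m \<Rightarrow> 'm"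
  assumes padd: "\<phi> (u + v) = \<phi> u + \<phi> v" and pscale: "\<phi> (s a v) = s a (\<phi> v)"
begin
lemma hom_phi: "module_hom s s \<phi>"
  by (simp add: module_hom_iff padd pscale module_axioms)
lemma hom_pow: "module_hom s s (\<phi> ^^ j)"
proof (induction j)
  case 0 then show ?case using module_axioms by (simp add: module_hom_iff)
next
  case (Suc j)
  then show ?case using hom_phi module_hom_compose[of s s "\<phi>^^j" s \<phi>] by (simp add: comp_def)
qed

lemma pow_add: "(\<phi>^^j) (u + v) = (\<phi>^^j) u + (\<phi>^^j) v"
  using module_hom.add[OF hom_pow] by blast
lemma pow_scale: "(\<phi>^^j) (s a v) = s a ((\<phi>^^j) v)"
  using module_hom.scale[OF hom_pow] by blast
lemma pow_zero[simp]: "(\<phi>^^j) 0 = 0"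
  using module_hom.zero[OF hom_pow] by blast
lemma pow_diff: "(\<phi>^^j) (u - v) = (\<phi>^^j) u - (\<phi>^^j) v"
  using module_hom.diff[OF hom_pow] by blast
lemma pow_kill: "(\<phi>^^m) v = 0 \<Longrightarrow> (\<phi>^^(m+n)) v = 0"
proof -
  assume "(\<phi>^^m) v = 0"
  moreover have "(\<phi>^^(n+m)) v = (\<phi>^^n) ((\<phi>^^m) v)" by (simp add: funpow_add)
  ultimately show ?thesis by (simp add: add.commute)
qed

lemma dim_strict:
  assumes "subspace A" "subspace A'" "A \<subseteq> A'" "A \<noteq> A'" "A' \<subseteq> span W" "finite W"
  shows "dim A < dim A'"
proof -
  obtain BA where BA: "BA \<subseteq> A" "independent BA" "A \<subseteq> span BA" "card BA = dim A" by (rule basis_exists)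
  obtain BA' where BA': "BA' \<subseteq> A'" "independent BA'" "A' \<subseteq> span BA'" "card BA' = dim A'" by (rule basis_exists)
  have fBA': "finite BA'" using independent_span_bound[OF assms(6) BA'(2)] BA'(1) assms(5) by auto
  obtain x where x: "x \<in> A'" "x \<notin> A" using assms(3,4) by auto
  have "span BA \<subseteq> A" using span_minimal BA(1) assms(1) by blast
  hence xn: "x \<notin> span BA" using x by auto
  hence xB: "x \<notin> BA" using span_base by blast
  have ind: "independent (insert x BA)" using independent_insertI[OF xn BA(2)] .
  have "insert x BA \<subseteq> span BA'" using BA(1) assms(3) x(1) BA'(3) by auto
  from independent_span_bound[OF fBA' ind this] have "finite (insert x BA)" "card (insert x BA) \<le> card BA'" by auto
  then show ?thesis using xB BA(4) BA'(4) by simp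
qed

lemma chain_dec:
  assumes "\<And>j. subspace (D j)" "\<And>j. D (Suc j) \<subseteq> D j" "\<And>j. D j \<subseteq> span W" "finite W"
  shows "\<exists>k. D (Suc k) = D k"
proof (rule ccontr)
  assume "\<not> ?thesis"
  hence lt: "\<And>j. dim (D (Suc j)) < dim (D j)"
    using dim_strict[OF assms(1) assms(1) assms(2) _ assms(3) assms(4)] by blast
  have "dim (D j) + j \<le> dim (D 0)" for j
  proof (induction j)
    case (Suc j) then show ?case using lt[of j] by linarith
  qed simp
  from this[of "Suc (dim (D 0))"] show False by simp
qed

lemma chain_inc:
  assumes "\<And>j. subspace (D j)" "\<And>j. D j \<subseteq> D (Suc j)" "\<And>j. D j \<subseteq> span W" "finite W"
  shows "\<exists>k. D (Suc k) = D k"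
proof (rule ccontr)
  assume "\<not> ?thesis"
  hence lt: "\<And>j. dim (D j) < dim (D (Suc j))"
    using dim_strict[OF assms(1) assms(1) assms(2) _ assms(3) assms(4)] by metis
  have "j \<le> dim (D j)" for j
  proof (induction j)
    case (Suc j) then show ?case using lt[of j] by linarith
  qed simp
  moreover have "dim (D j) \<le> card W" for j using dim_le_card[OF assms(3) assms(4)] .
  ultimately show False using le_trans not_less_eq_eq by blast
qed

lemma fitting:
  assumes fB: "finite B" and inv: "\<phi> ` span B \<subseteq> span B"
  shows "\<exists>k. (\<forall>j\<ge>k. (\<phi>^^j) ` span B = (\<phi>^^k) ` span B)
           \<and> (\<forall>j\<le>k. (\<phi>^^k) ` span B \<subseteq> (\<phi>^^j) ` span B)
           \<and> (\<forall>j\<ge>k. \<forall>w\<in>span B. (\<phi>^^j) w = 0 \<longrightarrow> (\<phi>^^k) w = 0)"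
proof -
  let ?F = "span B"
  have inv_pow: "(\<phi>^^j) ` ?F \<subseteq> ?F" for j
  proof (induction j)
    case (Suc j)
    have "(\<phi>^^Suc j) ` ?F = \<phi> ` ((\<phi>^^j) ` ?F)" by (simp add: image_comp)
    also have "\<dots> \<subseteq> \<phi> ` ?F" using Suc by auto
    finally show ?case using inv by auto
  qed simp
  define D where "D j = (\<phi>^^j) ` ?F" for j
  have Dsub: "subspace (D j)" for j
    unfolding D_def by (rule module_hom.subspace_image[OF hom_pow subspace_span])
  have Ddec: "D (Suc j) \<subseteq> D j" for j
  proof -
    have "D (Suc j) = (\<phi>^^j) ` (\<phi> ` ?F)" unfolding D_def by (simp only: funpow_Suc_right image_comp)
    also have "\<dots> \<subseteq> D j" unfolding D_def using inv by auto
    finally show ?thesis .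
  qed
  have DW: "D j \<subseteq> span B" for j unfolding D_def by (rule inv_pow)
  obtain k1 where k1: "D (Suc k1) = D k1" using chain_dec[of D B, OF Dsub Ddec DW fB] by blast
  have Dstab: "D (k1 + i) = D k1" for i
  proof (induction i)
    case (Suc i)
    have "D (k1 + Suc i) = \<phi> ` D (k1 + i)" unfolding D_def by (simp add: image_comp)
    also have "\<dots> = \<phi> ` D k1" using Suc by simp
    also have "\<dots> = D (Suc k1)" unfolding D_def by (simp add: image_comp)
    finally show ?case using k1 by simp
  qed simp
  have Dmono: "j \<le> k \<Longrightarrow> D k \<subseteq> D j" for j k
    using lift_Suc_antimono_le[of D, OF Ddec] by blast
  define E where "E j = ?F \<inter> {w. (\<phi>^^j) w = 0}" for j
  have Esub: "subspace (E j)" for j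
    unfolding E_def by (rule subspace_inter[OF subspace_span module_hom.subspace_kernel[OF hom_pow]])
  have Einc: "E j \<subseteq> E (Suc j)" for j
    unfolding E_def using module_hom.zero[OF hom_phi] by auto
  have EW: "E j \<subseteq> span B" for j unfolding E_def by auto
  obtain k2 where k2: "E (Suc k2) = E k2" using chain_inc[of E B, OF Esub Einc EW fB] by blast
  have Emono: "j \<le> k \<Longrightarrow> E j \<subseteq> E k" for j k
    using lift_Suc_mono_le[of E, OF Einc] by blast
  have Estab: "E (k2 + i) = E k2" for i
  proof (induction i)
    case (Suc i)
    show ?case
    proof
      show "E (k2 + Suc i) \<subseteq> E k2"
      proof
        fix w assume w: "w \<in> E (k2 + Suc i)"
        have "(\<phi>^^(k2 + Suc i)) w = (\<phi>^^(Suc k2)) ((\<phi>^^i) w)"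
        proof -
          have "(\<phi>^^(k2 + Suc i)) w = (\<phi>^^(Suc k2 + i)) w" by simp
          also have "\<dots> = (\<phi>^^(Suc k2)) ((\<phi>^^i) w)" by (simp only: funpow_add comp_apply)
          finally show ?thesis .
        qed
        moreover have "(\<phi>^^i) w \<in> ?F" using inv_pow w unfolding E_def by blast
        ultimately have "(\<phi>^^i) w \<in> E (Suc k2)" using w unfolding E_def by auto
        hence "(\<phi>^^i) w \<in> E k2" using k2 by simp
        hence "(\<phi>^^k2) ((\<phi>^^i) w) = 0" unfolding E_def by simp
        moreover have "(\<phi>^^(k2 + i)) w = (\<phi>^^k2) ((\<phi>^^i) w)" by (simp only: funpow_add comp_apply)
        ultimately have "(\<phi>^^(k2 + i)) w = 0" by simp
        hence "w \<in> E (k2 + i)" using w unfolding E_def by auto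
        then show "w \<in> E k2" using Suc by simp
      qed
      show "E k2 \<subseteq> E (k2 + Suc i)" by (rule Emono) simp
    qed
  qed simp
  define k where "k = max k1 k2"
  have 1: "\<forall>j\<ge>k. D j = D k"
  proof (intro allI impI)
    fix j assume "k \<le> j"
    then have "D j = D k1" "D k = D k1" unfolding k_def
      using Dstab[of "j - k1"] Dstab[of "k - k1"] by (auto simp: k_def)
    then show "D j = D k" by simp
  qed
  have 2: "\<forall>j\<ge>k. E j = E k"
  proof (intro allI impI)
    fix j assume "k \<le> j"
    then have "E j = E k2" "E k = E k2" unfolding k_def
      using Estab[of "j - k2"] Estab[of "k - k2"] by (auto simp: k_def)
    then show "E j = E k" by simp
  qed
  show ?thesis
  proof (intro exI[of _ k] conjI)
    show "\<forall>j\<ge>k. (\<phi>^^j) ` span B = (\<phi>^^k) ` span B" using 1 unfolding D_def by blast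
    show "\<forall>j\<le>k. (\<phi>^^k) ` span B \<subseteq> (\<phi>^^j) ` span B" using Dmono unfolding D_def by blast
    show "\<forall>j\<ge>k. \<forall>w\<in>span B. (\<phi>^^j) w = 0 \<longrightarrow> (\<phi>^^k) w = 0"
      using 2 unfolding E_def by blast
  qed
qed


lemma span_un:
assumes "\<phi> ` span B1 \<subseteq> span B1" "\<phi> ` span B2 \<subseteq> span B2"
shows "\<phi> ` span (B1 \<union> B2) \<subseteq> span (B1 \<union> B2)"
proof -
  have "\<phi> ` span (B1 \<union> B2) = span (\<phi> ` (B1 \<union> B2))"
    using module_hom.span_image[OF hom_phi] by blast
  also have "\<dots> \<subseteq> span (span (B1 \<union> B2))"
  proof (rule span_mono)
    have "\<phi> ` B1 \<subseteq> \<phi> ` span B1" by (rule image_mono[OF span_superset])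
    also have "\<dots> \<subseteq> span B1" by (rule assms(1))
    also have "\<dots> \<subseteq> span (B1 \<union> B2)" by (rule span_mono) simp
    finally have "\<phi> ` B1 \<subseteq> span (B1 \<union> B2)" .
    moreover have "\<phi> ` B2 \<subseteq> span (B1 \<union> B2)"
    proof -
      have "\<phi> ` B2 \<subseteq> \<phi> ` span B2" by (rule image_mono[OF span_superset])
      also have "\<dots> \<subseteq> span B2" by (rule assms(2))
      also have "\<dots> \<subseteq> span (B1 \<union> B2)" by (rule span_mono) simp
      finally show ?thesis .
    qed
    ultimately show "\<phi> ` (B1 \<union> B2) \<subseteq> span (B1 \<union> B2)" by auto
  qed
  finally show ?thesis by (simp add: span_span)
qed

lemma fit_decomp:
  assumes fB: "finite B" and inv: "\<phi> ` span B \<subseteq> span B" and v: "v \<in> span B"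
  shows "\<exists>a b. v = a + b \<and> (\<exists>m. (\<phi>^^m) a = 0) \<and> (\<forall>j. \<exists>w\<in>span B. b = (\<phi>^^j) w)"
proof -
  from fitting[OF fB inv] obtain k where kk: "(\<forall>j\<ge>k. (\<phi>^^j) ` span B = (\<phi>^^k) ` span B)
           \<and> (\<forall>j\<le>k. (\<phi>^^k) ` span B \<subseteq> (\<phi>^^j) ` span B)
           \<and> (\<forall>j\<ge>k. \<forall>w\<in>span B. (\<phi>^^j) w = 0 \<longrightarrow> (\<phi>^^k) w = 0)" ..
  note k1 = conjunct1[OF kk] and k2 = conjunct1[OF conjunct2[OF kk]]
  have "(\<phi>^^(k+k)) ` span B = (\<phi>^^k) ` span B" by (rule k1[rule_format]) simp
  moreover have "(\<phi>^^k) v \<in> (\<phi>^^k) ` span B" using v by (rule imageI)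
  ultimately have "(\<phi>^^k) v \<in> (\<phi>^^(k+k)) ` span B" by simp
  then obtain w where w: "w \<in> span B" "(\<phi>^^k) v = (\<phi>^^(k+k)) w" by auto
  have w2: "(\<phi>^^(k+k)) w = (\<phi>^^k) ((\<phi>^^k) w)" by (simp only: funpow_add comp_apply)
  show ?thesis
  proof (intro exI conjI)
    show "v = (v - (\<phi>^^k) w) + (\<phi>^^k) w" by simp
    show "(\<phi>^^k) (v - (\<phi>^^k) w) = 0" using w w2 by (simp add: pow_diff)
    show "\<forall>j. \<exists>w'\<in>span B. (\<phi>^^k) w = (\<phi>^^j) w'"
    proof
      fix j
      have "(\<phi>^^k) w \<in> (\<phi>^^j) ` span B"
      proof (cases "j \<le> k")
        case True then show ?thesis using k2 w(1) by blast
      next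
        case False
        then have "(\<phi>^^j) ` span B = (\<phi>^^k) ` span B" by (intro k1[rule_format]) simp
        moreover have "(\<phi>^^k) w \<in> (\<phi>^^k) ` span B" using w(1) by (rule imageI)
        ultimately show ?thesis by simp
      qed
      then show "\<exists>w'\<in>span B. (\<phi>^^k) w = (\<phi>^^j) w'" by auto
    qed
  qed
qed

lemma fit_trivial:
  assumes fB: "finite B" and inv: "\<phi> ` span B \<subseteq> span B"
    and m: "(\<phi>^^m) v = 0" and all: "\<forall>j. \<exists>w\<in>span B. v = (\<phi>^^j) w"
  shows "v = 0"
proof -
  from fitting[OF fB inv] obtain k where kk: "(\<forall>j\<ge>k. (\<phi>^^j) ` span B = (\<phi>^^k) ` span B)
           \<and> (\<forall>j\<le>k. (\<phi>^^k) ` span B \<subseteq> (\<phi>^^j) ` span B)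
           \<and> (\<forall>j\<ge>k. \<forall>w\<in>span B. (\<phi>^^j) w = 0 \<longrightarrow> (\<phi>^^k) w = 0)" ..
  note k3 = conjunct2[OF conjunct2[OF kk]]
  obtain w where w: "w \<in> span B" "v = (\<phi>^^k) w" using all by blast
  have "(\<phi>^^(m+k)) w = (\<phi>^^m) ((\<phi>^^k) w)" by (simp only: funpow_add comp_apply)
  then have "(\<phi>^^(m+k)) w = 0" using m w by simp
  then have "(\<phi>^^k) w = 0" using k3 w(1) le_add2[of k m] by blast
  then show ?thesis using w by simp
qed

lemma fitting_global:
  fixes act :: "'g \<Rightarrow> 'm \<Rightarrow> 'm"
  assumes aadd: "\<And>x u v. act x (u + v) = act x u + act x v"
    and ascale: "\<And>x a v. act x (s a v) = s a (act x v)"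
    and comm: "\<And>x v. \<phi> (act x v) = act x (\<phi> v)"
    and loc: "\<And>v. \<exists>B. finite B \<and> \<phi> ` span B \<subseteq> span B \<and> v \<in> span B"
    and indec: "\<And>U V. subspace U \<and> (\<forall>x u. u \<in> U \<longrightarrow> act x u \<in> U) \<Longrightarrow>
                 subspace V \<and> (\<forall>x u. u \<in> V \<longrightarrow> act x u \<in> V) \<Longrightarrow>
                 U \<inter> V = {0} \<Longrightarrow> {u + v | u v. u \<in> U \<and> v \<in> V} = UNIV \<Longrightarrow> U = {0} \<or> V = {0}"
  shows "bij \<phi> \<or> (\<forall>v. \<exists>k. (\<phi>^^k) v = 0)"
proof -
  have hom_act: "module_hom s s (act x)" for x
    by (simp add: module_hom_iff aadd ascale module_axioms)
  have act0: "act x 0 = 0" for x using module_hom.zero[OF hom_act] by blast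
  have comm_pow: "(\<phi>^^j) (act x v) = act x ((\<phi>^^j) v)" for j x v
    by (induction j) (simp_all add: comm)
  define K where "K = {v. \<exists>m. (\<phi>^^m) v = 0}"
  define I where "I = {v. \<exists>B. finite B \<and> \<phi> ` span B \<subseteq> span B \<and> (\<forall>j. \<exists>w\<in>span B. v = (\<phi>^^j) w)}"
  have Ksub: "subspace K"
  proof (rule subspaceI)
    show "0 \<in> K" unfolding K_def by auto
    fix x y assume "x \<in> K" "y \<in> K"
    then obtain m1 m2 where "(\<phi>^^m1) x = 0" "(\<phi>^^m2) y = 0" unfolding K_def by auto
    then have "(\<phi>^^(m1+m2)) x = 0" "(\<phi>^^(m2+m1)) y = 0" using pow_kill by blast+
    then have "(\<phi>^^(m1+m2)) (x + y) = 0" by (simp add: pow_add add.commute)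
    then show "x + y \<in> K" unfolding K_def by blast
  next
    fix c x assume "x \<in> K"
    then show "s c x \<in> K" unfolding K_def by (auto simp: pow_scale)
  qed
  have Kact: "\<forall>x u. u \<in> K \<longrightarrow> act x u \<in> K"
  proof (intro allI impI)
    fix x u assume "u \<in> K"
    then obtain m where "(\<phi>^^m) u = 0" unfolding K_def by blast
    then have "(\<phi>^^m) (act x u) = 0" by (simp add: comm_pow act0)
    then show "act x u \<in> K" unfolding K_def by blast
  qed
  have Isub: "subspace I"
  proof (rule subspaceI)
    have "\<phi> 0 = 0" using module_hom.zero[OF hom_phi] by blast
    then show "0 \<in> I" unfolding I_def by (intro CollectI exI[of _ "{}"]) auto
    fix x y assume xI: "x \<in> I" and yI: "y \<in> I"
    from xI obtain B1 where B1: "finite B1" "\<phi> ` span B1 \<subseteq> span B1" "\<forall>j. \<exists>w\<in>span B1. x = (\<phi>^^j) w"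
      unfolding I_def by blast
    from yI obtain B2 where B2: "finite B2" "\<phi> ` span B2 \<subseteq> span B2" "\<forall>j. \<exists>w\<in>span B2. y = (\<phi>^^j) w"
      unfolding I_def by blast
    have "\<forall>j. \<exists>w\<in>span (B1 \<union> B2). x + y = (\<phi>^^j) w"
    proof
      fix j
      obtain w1 w2 where ww: "w1 \<in> span B1" "x = (\<phi>^^j) w1" "w2 \<in> span B2" "y = (\<phi>^^j) w2"
        using B1(3) B2(3) by blast
      have "w1 \<in> span (B1 \<union> B2)" using ww(1) span_mono[of B1 "B1 \<union> B2"] by auto
      moreover have "w2 \<in> span (B1 \<union> B2)" using ww(3) span_mono[of B2 "B1 \<union> B2"] by auto
      ultimately have "w1 + w2 \<in> span (B1 \<union> B2)" by (rule span_add)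
      moreover have "x + y = (\<phi>^^j) (w1 + w2)" using ww by (simp add: pow_add)
      ultimately show "\<exists>w\<in>span (B1 \<union> B2). x + y = (\<phi>^^j) w" by blast
    qed
    moreover have "finite (B1 \<union> B2)" using B1(1) B2(1) by simp
    moreover have "\<phi> ` span (B1 \<union> B2) \<subseteq> span (B1 \<union> B2)" by (rule span_un[OF B1(2) B2(2)])
    ultimately show "x + y \<in> I" unfolding I_def by blast
  next
    fix c x assume "x \<in> I"
    then obtain B where B: "finite B" "\<phi> ` span B \<subseteq> span B" "\<forall>j. \<exists>w\<in>span B. x = (\<phi>^^j) w"
      unfolding I_def by blast
    have "\<forall>j. \<exists>w\<in>span B. s c x = (\<phi>^^j) w"
    proof
      fix j obtain w where "w \<in> span B" "x = (\<phi>^^j) w" using B(3) by blast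
      then show "\<exists>w\<in>span B. s c x = (\<phi>^^j) w" by (auto simp: pow_scale intro!: bexI[of _ "s c w"] span_scale)
    qed
    then show "s c x \<in> I" unfolding I_def using B by blast
  qed
  have Iact: "\<forall>x u. u \<in> I \<longrightarrow> act x u \<in> I"
  proof (intro allI impI)
    fix x u assume "u \<in> I"
    then obtain B where B: "finite B" "\<phi> ` span B \<subseteq> span B" "\<forall>j. \<exists>w\<in>span B. u = (\<phi>^^j) w"
      unfolding I_def by blast
    have sp: "span (act x ` B) = act x ` span B" using module_hom.span_image[OF hom_act] by blast
    have "\<phi> ` span (act x ` B) = act x ` (\<phi> ` span B)"
      unfolding sp image_image by (simp add: comm)
    also have "\<dots> \<subseteq> span (act x ` B)" using B(2) sp by auto
    finally have inv': "\<phi> ` span (act x ` B) \<subseteq> span (act x ` B)" .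
    have "\<forall>j. \<exists>w\<in>span (act x ` B). act x u = (\<phi>^^j) w"
    proof
      fix j obtain w where "w \<in> span B" "u = (\<phi>^^j) w" using B(3) by blast
      then show "\<exists>w\<in>span (act x ` B). act x u = (\<phi>^^j) w"
        using sp by (auto simp: comm_pow)
    qed
    then show "act x u \<in> I" unfolding I_def using B(1) inv' by blast
  qed
  have KI: "K \<inter> I = {0}"
  proof
    show "K \<inter> I \<subseteq> {0}"
    proof
      fix v assume "v \<in> K \<inter> I"
      then obtain m B where h: "(\<phi>^^m) v = 0" "finite B" "\<phi> ` span B \<subseteq> span B" "\<forall>j. \<exists>w\<in>span B. v = (\<phi>^^j) w"
        unfolding K_def I_def by blast
      have "v = 0" by (rule fit_trivial[OF h(2) h(3) h(1) h(4)])
      then show "v \<in> {0}" by simp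
    qed
    show "{0} \<subseteq> K \<inter> I" using subspace_0[OF Ksub] subspace_0[OF Isub] by simp
  qed
  have KIsum: "{u + v | u v. u \<in> K \<and> v \<in> I} = UNIV"
  proof (rule set_eqI, rule iffI)
    fix v :: 'm
    obtain B where B: "finite B" "\<phi> ` span B \<subseteq> span B" "v \<in> span B" using loc by blast
    from fit_decomp[OF B] obtain a b where "v = a + b" "\<exists>m. (\<phi>^^m) a = 0" "\<forall>j. \<exists>w\<in>span B. b = (\<phi>^^j) w"
      by blast
    then have "a \<in> K" "b \<in> I" unfolding K_def I_def using B(1,2) by blast+
    then show "v \<in> {u + v | u v. u \<in> K \<and> v \<in> I}" using \<open>v = a + b\<close> by blast
  qed simp
  from indec[OF conjI[OF Ksub Kact] conjI[OF Isub Iact] KI KIsum]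
  show ?thesis
  proof
    assume K0: "K = {0}"
    have inj: "inj \<phi>"
      unfolding module_hom.inj_iff_eq_0[OF hom_phi]
    proof (intro allI impI)
      fix x assume "\<phi> x = 0"
      then have "x \<in> K" unfolding K_def by (auto intro!: exI[of _ 1])
      then show "x = 0" using K0 by simp
    qed
    have "surj \<phi>"
    proof (rule surjI[where f = "\<lambda>y. SOME x. y = \<phi> x"])
      fix y
      have "y \<in> {u + v | u v. u \<in> K \<and> v \<in> I}" using KIsum by simp
      then have "y \<in> I" using K0 by auto
      then obtain B w where "w \<in> span B" "y = (\<phi>^^1) w" unfolding I_def by blast
      then have "\<exists>x. y = \<phi> x" by auto
      then show "\<phi> (SOME x. y = \<phi> x) = y" by (metis (mono_tags) someI_ex)
    qed
    then show ?thesis using inj bij_def by blast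
  next
    assume I0: "I = {0}"
    have "\<forall>v. \<exists>k. (\<phi>^^k) v = 0"
    proof
      fix v :: 'm
      have "v \<in> {u + v | u v. u \<in> K \<and> v \<in> I}" using KIsum by simp
      then have "v \<in> K" using I0 by auto
      then show "\<exists>k. (\<phi>^^k) v = 0" unfolding K_def by blast
    qed
    then show ?thesis by blast
  qed
qed

end

theorem mainTheorem8:
  fixes sg :: "'k::field_char_0 \<Rightarrow> 'g::ab_group_add \<Rightarrow> 'g"
    and br :: "'g \<Rightarrow> 'g \<Rightarrow> 'g"
    and gs :: "nat \<Rightarrow> 'g set"
    and h :: "'g set"
    and P :: "('g \<Rightarrow> 'k) set"
    and sm :: "'k \<Rightarrow> 'm::ab_group_add \<Rightarrow> 'm"
    and act :: "'g \<Rightarrow> 'm \<Rightarrow> 'm"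
    and \<phi> :: "'m \<Rightarrow> 'm"
  assumes "alg_closed_field TYPE('k)"
    and "lie_algebra sg br"
    and "root_reductive sg br gs h"
    and "splitting_max_toral sg br h"
    and "pos_system sg br h P"
    and "dynkin sg br h P"
    and "in_O_bar sg br h P sm act"
    and "indecomposable sm act"
    and "module_endo sm act \<phi>"
  shows "bij \<phi> \<or> (\<forall>v. \<exists>k. (\<phi> ^^ k) v = 0)"
proof -
  from assms(7) have gm: "g_module sg br sm act"
    and spanW: "module.span sm (\<Union>lam. weight_space sm act h lam) = UNIV"
    and fd: "\<And>lam. fin_dim sm (weight_space sm act h lam)"
    unfolding in_O_bar_def by auto
  from gm have vs: "vector_space sm"
    and aadd: "\<And>x u v. act x (u + v) = act x u + act x v"
    and ascale: "\<And>x a v. act x (sm a v) = sm a (act x v)"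
    unfolding g_module_def by auto
  from assms(9) have padd: "\<And>u v. \<phi> (u + v) = \<phi> u + \<phi> v"
    and pscale: "\<And>a v. \<phi> (sm a v) = sm a (\<phi> v)"
    and comm: "\<And>x v. \<phi> (act x v) = act x (\<phi> v)"
    unfolding module_endo_def by auto
  interpret F: fitctx sm \<phi>
    using vs padd pscale by (simp add: fitctx_def fitctx_axioms_def)
  define G where "G = {v. \<exists>B. finite B \<and> \<phi> ` F.span B \<subseteq> F.span B \<and> v \<in> F.span B}"
  have Gsub: "F.subspace G"
  proof (rule F.subspaceI)
    have "\<phi> 0 = 0" using module_hom.zero[OF F.hom_phi] by blast
    then show "0 \<in> G" unfolding G_def by (intro CollectI exI[of _ "{}"]) auto
  next
    fix x y assume xG: "x \<in> G" and yG: "y \<in> G"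
    from xG obtain B1 where B1: "finite B1" "\<phi> ` F.span B1 \<subseteq> F.span B1" "x \<in> F.span B1"
      unfolding G_def by blast
    from yG obtain B2 where B2: "finite B2" "\<phi> ` F.span B2 \<subseteq> F.span B2" "y \<in> F.span B2"
      unfolding G_def by blast
    have "x \<in> F.span (B1 \<union> B2)" using B1(3) F.span_mono[of B1 "B1 \<union> B2"] by auto
    moreover have "y \<in> F.span (B1 \<union> B2)" using B2(3) F.span_mono[of B2 "B1 \<union> B2"] by auto
    ultimately have "x + y \<in> F.span (B1 \<union> B2)" by (rule F.span_add)
    moreover have "finite (B1 \<union> B2)" using B1(1) B2(1) by simp
    moreover have "\<phi> ` F.span (B1 \<union> B2) \<subseteq> F.span (B1 \<union> B2)" by (rule F.span_un[OF B1(2) B2(2)])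
    ultimately show "x + y \<in> G" unfolding G_def by blast
  next
    fix c x assume "x \<in> G"
    then obtain B where B: "finite B" "\<phi> ` F.span B \<subseteq> F.span B" "x \<in> F.span B"
      unfolding G_def by blast
    have "sm c x \<in> F.span B" using B(3) by (rule F.span_scale)
    then show "sm c x \<in> G" unfolding G_def using B(1,2) by blast
  qed
  have WG: "(\<Union>lam. weight_space sm act h lam) \<subseteq> G"
  proof
    fix v assume "v \<in> (\<Union>lam. weight_space sm act h lam)"
    then obtain lam where v: "v \<in> weight_space sm act h lam" by blast
    let ?W = "weight_space sm act h lam"
    from fd[of lam] obtain Fs where Fs: "finite Fs" "Fs \<subseteq> ?W" "F.span Fs = ?W"
      unfolding fin_dim_def by blast
    have "\<phi> ` ?W \<subseteq> ?W"
    proof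
      fix z assume "z \<in> \<phi> ` ?W"
      then obtain u where u: "u \<in> ?W" "z = \<phi> u" by blast
      have "\<forall>t\<in>h. act t z = sm (lam t) z"
      proof
        fix t assume "t \<in> h"
        then have "act t u = sm (lam t) u" using u(1) unfolding weight_space_def by blast
        then show "act t z = sm (lam t) z" using u(2) comm pscale by metis
      qed
      then show "z \<in> ?W" unfolding weight_space_def by blast
    qed
    then have "finite Fs \<and> \<phi> ` F.span Fs \<subseteq> F.span Fs \<and> v \<in> F.span Fs" using Fs v by simp
    then show "v \<in> G" unfolding G_def by blast
  qed
  have loc: "\<And>v. \<exists>B. finite B \<and> \<phi> ` F.span B \<subseteq> F.span B \<and> v \<in> F.span B"
  proof -
    fix v
    have "F.span (\<Union>lam. weight_space sm act h lam) \<subseteq> G" by (rule F.span_minimal[OF WG Gsub])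
    then have "v \<in> G" using spanW by auto
    then show "\<exists>B. finite B \<and> \<phi> ` F.span B \<subseteq> F.span B \<and> v \<in> F.span B" unfolding G_def by blast
  qed
  have indec: "\<And>U V. F.subspace U \<and> (\<forall>x u. u \<in> U \<longrightarrow> act x u \<in> U) \<Longrightarrow>
                 F.subspace V \<and> (\<forall>x u. u \<in> V \<longrightarrow> act x u \<in> V) \<Longrightarrow>
                 U \<inter> V = {0} \<Longrightarrow> {u + v | u v. u \<in> U \<and> v \<in> V} = UNIV \<Longrightarrow> U = {0} \<or> V = {0}"
    using assms(8) unfolding indecomposable_def submodule_def by blast
  show ?thesis by (rule F.fitting_global[OF aadd ascale comm loc indec])
qed

end
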